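(* Let $0<\mathcal{R}_0\le1$ and let $F$ be a convex, nonnegative, differentiable function on $\{x'\in\mathbb{R}^{n-1}:|x'|\le\mathcal{R}_0\}$ with $F(0)=0$. For $r\in(0,\mathcal{R}_0)$ define $$\delta(r)=\max_{|x'|\le r}\frac{F(x')}{|x'|},\qquad \delta_1(r)=\max_{|x'|\le r}|\nabla F(x')|.$$ Then: (a) $\delta_1(r)\to0$ as $r\to0$ if and only if $\delta(r)\to0$ as $r\to0$; (b) $\delta_1$ satisfies the Dini condition at zero if and only if $\delta$ satisfies the Dini condition at zero.
   Context: Class $\mathcal{D}_1$: a function $\sigma:[0,1]\to\mathbb{R}_+$ belongs to $\mathcal{D}_1$ if - $\sigma$ is increasing, $\sigma(0)=0$ and $\sigma(1)=1$; - $\sigma(t)/t$ is summable on $(0,1)$ and decreasing. A function $\zeta$ satisfies the Dini condition at zero if $|\zeta(r)|\le C\sigma(r)$ (for small $r>0$) for some constant $C$ and some $\sigma\in\mathcal{D}_1$. *)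

theory Defs
  imports "HOL-Analysis.Analysis"
begin

definition class_D1 :: "(real \<Rightarrow> real) set" where
  "class_D1 = {\<sigma>. (\<forall>t\<in>{0..1}. 0 \<le> \<sigma> t)
      \<and> mono_on {0..1} \<sigma>
      \<and> \<sigma> 0 = 0 \<and> \<sigma> 1 = 1
      \<and> (\<lambda>t. \<sigma> t / t) integrable_on {0<..<1}
      \<and> (\<forall>s t. 0 < s \<and> s \<le> t \<and> t \<le> 1 \<longrightarrow> \<sigma> t / t \<le> \<sigma> s / s)}"

definition dini_at_zero :: "(real \<Rightarrow> real) \<Rightarrow> bool" where
  "dini_at_zero \<zeta> \<longleftrightarrow>
     (\<exists>C \<sigma>. \<sigma> \<in> class_D1 \<and> (\<forall>\<^sub>F r in at_right 0. \<bar>\<zeta> r\<bar> \<le> C * \<sigma> r))"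

definition delta :: "('a::euclidean_space \<Rightarrow> real) \<Rightarrow> real \<Rightarrow> real" where
  "delta F r = Sup {F x / norm x | x. 0 < norm x \<and> norm x \<le> r}"

definition delta1 :: "('a::euclidean_space \<Rightarrow> real) \<Rightarrow> real \<Rightarrow> real" where
  "delta1 F r = Sup {norm D | x D. norm x \<le> r \<and> (F has_derivative (\<lambda>h. D \<bullet> h)) (at x)}"

end

theory Submission
  imports Defs
begin

lemma lin_repr:
  fixes f :: "'a::euclidean_space \<Rightarrow> real"
  assumes "linear f"
  shows "f = (\<lambda>h. (\<Sum>b\<in>Basis. f b *\<^sub>R b) \<bullet> h)"
proof
  fix h
  have "f h = f (\<Sum>b\<in>Basis. (h \<bullet> b) *\<^sub>R b)" by (simp add: euclidean_representation)
  also have "\<dots> = (\<Sum>b\<in>Basis. (h \<bullet> b) * f b)"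
    using assms by (simp add: linear_sum linear_scale)
  also have "\<dots> = (\<Sum>b\<in>Basis. f b *\<^sub>R b) \<bullet> h"
    by (simp add: inner_sum_right inner_commute mult.commute)
  finally show "f h = (\<Sum>b\<in>Basis. f b *\<^sub>R b) \<bullet> h" .
qed

lemma grad_ineq:
  fixes F :: "'a::euclidean_space \<Rightarrow> real"
  assumes cv: "convex_on S F" and x: "x \<in> S" and y: "y \<in> S"
    and d: "(F has_derivative (\<lambda>h. D \<bullet> h)) (at x)"
  shows "D \<bullet> (y - x) \<le> F y - F x"
proof -
  define g where "g t = F (x + t *\<^sub>R (y - x))" for t :: real
  have d1: "((\<lambda>t. x + t *\<^sub>R (y - x)) has_derivative (\<lambda>t. t *\<^sub>R (y - x))) (at 0)"
    by (auto intro!: derivative_eq_intros)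
  have d2: "(F has_derivative (\<lambda>h. D \<bullet> h)) (at (x + 0 *\<^sub>R (y - x)))" using d by simp
  have "(g has_derivative (\<lambda>t. D \<bullet> (t *\<^sub>R (y - x)))) (at 0)"
    unfolding g_def using has_derivative_compose[OF d1 d2] .
  then have "(g has_field_derivative (D \<bullet> (y - x))) (at 0)"
    by (simp add: has_field_derivative_def mult.commute mult_commute_abs)
  then have "((\<lambda>t. (g t - g 0) / (t - 0)) \<longlongrightarrow> D \<bullet> (y - x)) (at 0)"
    using has_field_derivative_iff by blast
  then have lim: "((\<lambda>t. (g t - g 0) / (t - 0)) \<longlongrightarrow> D \<bullet> (y - x)) (at_right 0)"
    using filterlim_at_split by blast
  have ev: "\<forall>\<^sub>F t in at_right 0. (g t - g 0) / (t - 0) \<le> F y - F x"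
    using eventually_at_right_real[OF zero_less_one]
  proof (rule eventually_mono)
    fix t :: real assume t: "t \<in> {0<..<1}"
    have "g t = F ((1 - t) *\<^sub>R x + t *\<^sub>R y)" unfolding g_def by (simp add: algebra_simps)
    also have "\<dots> \<le> (1 - t) * F x + t * F y" using convex_onD[OF cv, of t x y] t x y by auto
    finally have "g t - g 0 \<le> t * (F y - F x)" by (simp add: g_def algebra_simps)
    then show "(g t - g 0) / (t - 0) \<le> F y - F x" using t by (simp add: field_simps)
  qed
  show ?thesis by (rule tendsto_upperbound[OF lim ev]) simp
qed

lemma key:
  fixes F :: "'a::euclidean_space \<Rightarrow> real" and R0 :: real
  assumes R0: "0 < R0"
    and cv: "convex_on (cball 0 R0) F"
    and nn: "\<forall>x\<in>cball 0 R0. 0 \<le> F x"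
    and df: "F differentiable_on cball 0 R0"
    and F0: "F 0 = 0"
    and r: "0 < r" "2 * r \<le> R0"
  shows "0 \<le> delta F r \<and> delta F r \<le> delta1 F r \<and> delta1 F r \<le> 2 * delta F (2 * r)"
proof -
  have "compact (F ` cball 0 R0)"
    using compact_continuous_image[OF differentiable_imp_continuous_on[OF df]] by simp
  then obtain M where M: "\<And>x. x \<in> cball 0 R0 \<Longrightarrow> F x \<le> M"
    using compact_imp_bounded bounded_real by (metis abs_le_D1 imageI)
  have Bd: "F x / norm x \<le> M / R0" if x: "0 < norm x" "norm x \<le> R0" for x
  proof -
    define t where "t = norm x / R0"
    define y where "y = (R0 / norm x) *\<^sub>R x"
    have t: "0 \<le> t" "t \<le> 1" using x R0 by (auto simp: t_def field_simps)
    have ny: "norm y = R0" using x R0 by (simp add: y_def)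
    have xe: "x = (1 - t) *\<^sub>R 0 + t *\<^sub>R y" using x R0 by (simp add: y_def t_def)
    have "F x \<le> (1 - t) * F 0 + t * F y"
      using convex_onD[OF cv t, of 0 y] xe R0 ny by simp
    also have "\<dots> \<le> t * M" using F0 M[of y] ny t by (simp add: mult_left_mono)
    finally show ?thesis using x R0 by (simp add: t_def field_simps)
  qed
  obtain b :: 'a where b: "b \<in> Basis" using nonempty_Basis by blast
  have grad: "\<exists>D. (F has_derivative (\<lambda>h. D \<bullet> h)) (at x)" if "norm x < R0" for x
  proof -
    have xi: "x \<in> interior (cball 0 R0)" using that by simp
    have "F differentiable (at x within cball 0 R0)" using df xi interior_subset
      by (meson differentiable_on_def subsetD)
    then have "F differentiable (at x)" using at_within_interior[OF xi] by simp
    then obtain f' where f': "(F has_derivative f') (at x)" by (auto simp: differentiable_def)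
    then have "linear f'" using has_derivative_linear by blast
    then show ?thesis using f' lin_repr by metis
  qed
  define S where "S s = {F x / norm x | x. 0 < norm x \<and> norm x \<le> s}" for s
  define S1 where "S1 s = {norm D | x D. norm x \<le> s \<and> (F has_derivative (\<lambda>h. D \<bullet> h)) (at x)}" for s
  have Sne: "S s \<noteq> {}" if "0 < s" for s
  proof -
    have "F (s *\<^sub>R b) / norm (s *\<^sub>R b) \<in> S s" unfolding S_def using that b by (auto intro!: exI[of _ "s *\<^sub>R b"])
    then show ?thesis by blast
  qed
  have Sbdd: "bdd_above (S s)" if "s \<le> R0" for s
    unfolding S_def using Bd that by (intro bdd_aboveI[of _ "M / R0"]) auto
  have dpos: "0 \<le> delta F s" if "0 < s" "s \<le> R0" for s
  proof -
    have "F (s *\<^sub>R b) / norm (s *\<^sub>R b) \<in> S s" unfolding S_def using that b by (auto intro!: exI[of _ "s *\<^sub>R b"])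
    moreover have "0 \<le> F (s *\<^sub>R b) / norm (s *\<^sub>R b)" using nn that b by auto
    ultimately show ?thesis unfolding delta_def S_def[symmetric]
      using cSup_upper[OF _ Sbdd[OF that(2)]] by (meson order_trans)
  qed
  have Fle: "F y \<le> delta F s * norm y" if "norm y \<le> s" "0 < s" "s \<le> R0" for y s
  proof (cases "y = 0")
    case True then show ?thesis using F0 by simp
  next
    case False
    then have "F y / norm y \<in> S s" unfolding S_def using that by auto
    then have "F y / norm y \<le> delta F s" unfolding delta_def S_def[symmetric]
      using cSup_upper[OF _ Sbdd[OF that(3)]] by blast
    then show ?thesis using False by (simp add: field_simps)
  qed
  have S1bd: "e \<le> 2 * delta F (2 * r)" if eS: "e \<in> S1 r" for e
  proof -
    obtain x D where xD: "e = norm D" "norm x \<le> r" "(F has_derivative (\<lambda>h. D \<bullet> h)) (at x)"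
      using eS unfolding S1_def by blast
    have d2: "0 \<le> delta F (2 * r)" using dpos r by simp
    show ?thesis
    proof (cases "D = 0")
      case True then show ?thesis using xD d2 by simp
    next
      case False
      define y where "y = x + (r / norm D) *\<^sub>R D"
      have ny: "norm y \<le> 2 * r"
      proof -
        have "norm y \<le> norm x + norm ((r / norm D) *\<^sub>R D)" unfolding y_def by (rule norm_triangle_ineq)
        also have "\<dots> = norm x + r" using False r by simp
        finally show ?thesis using xD by simp
      qed
      have yc: "y \<in> cball 0 R0" "x \<in> cball 0 R0" using ny r xD by auto
      have "D \<bullet> (y - x) \<le> F y - F x" by (rule grad_ineq[OF cv yc(2) yc(1) xD(3)])
      moreover have "D \<bullet> (y - x) = r * norm D"
        using False by (simp add: y_def power2_norm_eq_inner[symmetric] power2_eq_square)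
      moreover have "0 \<le> F x" using nn yc by auto
      moreover have "F y \<le> delta F (2 * r) * norm y" using Fle[OF ny] r by simp
      moreover have "delta F (2 * r) * norm y \<le> delta F (2 * r) * (2 * r)"
        using ny d2 by (simp add: mult_left_mono)
      ultimately have "r * norm D \<le> r * (2 * delta F (2 * r))" by (simp add: algebra_simps)
      then show ?thesis using xD r by simp
    qed
  qed
  have S1ne: "S1 r \<noteq> {}"
  proof -
    obtain D where "(F has_derivative (\<lambda>h. D \<bullet> h)) (at 0)" using grad[of 0] R0 by auto
    then have "norm D \<in> S1 r" unfolding S1_def using r by (intro CollectI exI[of _ "0::'a"] exI[of _ D]) auto
    then show ?thesis by blast
  qed
  have S1bdd: "bdd_above (S1 r)" using S1bd by (intro bdd_aboveI) 
  have A3: "delta1 F r \<le> 2 * delta F (2 * r)"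
    unfolding delta1_def S1_def[symmetric] by (rule cSup_least[OF S1ne S1bd])
  have A2: "delta F r \<le> delta1 F r"
    unfolding delta_def S_def[symmetric]
  proof (rule cSup_least[OF Sne[OF r(1)]])
    fix e assume "e \<in> S r"
    then obtain x where x: "e = F x / norm x" "0 < norm x" "norm x \<le> r" unfolding S_def by blast
    obtain D where D: "(F has_derivative (\<lambda>h. D \<bullet> h)) (at x)" using grad[of x] x r by auto
    have xc: "x \<in> cball 0 R0" "0 \<in> cball 0 R0" using x r by auto
    have "D \<bullet> (0 - x) \<le> F 0 - F x" by (rule grad_ineq[OF cv xc(1) xc(2) D])
    then have "F x \<le> D \<bullet> x" using F0 by (simp add: inner_diff_right)
    also have "\<dots> \<le> norm D * norm x" by (rule norm_cauchy_schwarz)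
    finally have "e \<le> norm D" using x by (simp add: divide_le_eq)
    also have "norm D \<in> S1 r" unfolding S1_def using x D by (intro CollectI exI[of _ x] exI[of _ D]) auto
    then have "norm D \<le> delta1 F r" unfolding delta1_def S1_def[symmetric]
      using cSup_upper[OF _ S1bdd] by blast
    finally show "e \<le> delta1 F r" .
  qed
  show ?thesis using A2 A3 dpos r by simp
qed

theorem lemma2p1:
  fixes F :: "'a::euclidean_space \<Rightarrow> real" and R0 :: real
  assumes "0 < R0" and "R0 \<le> 1"
    and "convex_on (cball 0 R0) F"
    and "\<forall>x\<in>cball 0 R0. 0 \<le> F x"
    and "F differentiable_on cball 0 R0"
    and "F 0 = 0"
  shows "((delta1 F \<longlongrightarrow> 0) (at_right 0) \<longleftrightarrow> (delta F \<longlongrightarrow> 0) (at_right 0))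
       \<and> (dini_at_zero (delta1 F) \<longleftrightarrow> dini_at_zero (delta F))"
proof -
  have K: "0 \<le> delta F r \<and> delta F r \<le> delta1 F r \<and> delta1 F r \<le> 2 * delta F (2 * r)"
    if "0 < r" "2 * r \<le> R0" for r
    using key[OF assms(1,3,4,5,6) that] .
  have evr: "\<forall>\<^sub>F r in at_right 0. 0 < r \<and> 2 * r \<le> R0"
    using eventually_at_right_real[of 0 "R0 / 2"] assms(1)
    by (auto elim!: eventually_mono)
  have evK: "\<forall>\<^sub>F r in at_right 0. 0 \<le> delta F r \<and> delta F r \<le> delta1 F r \<and> delta1 F r \<le> 2 * delta F (2 * r)"
    using evr by (rule eventually_mono) (use K in blast)
  have f2: "filterlim (\<lambda>r::real. 2 * r) (at_right 0) (at_right 0)"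
    unfolding filterlim_at
    by (auto intro!: tendsto_eq_intros simp: eventually_at_filter tendsto_mono[OF at_le])
  have A: "(delta1 F \<longlongrightarrow> 0) (at_right 0) \<longleftrightarrow> (delta F \<longlongrightarrow> 0) (at_right 0)"
  proof
    assume "(delta1 F \<longlongrightarrow> 0) (at_right 0)"
    then show "(delta F \<longlongrightarrow> 0) (at_right 0)"
      by (rule tendsto_sandwich[rotated 2, OF tendsto_const]) (use evK in \<open>auto elim: eventually_mono\<close>)
  next
    assume h: "(delta F \<longlongrightarrow> 0) (at_right 0)"
    have "((\<lambda>r. delta F (2 * r)) \<longlongrightarrow> 0) (at_right 0)"
      using filterlim_compose[OF h f2] .
    then have "((\<lambda>r. 2 * delta F (2 * r)) \<longlongrightarrow> 0) (at_right 0)"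
      using tendsto_mult_right_zero by blast
    then show "(delta1 F \<longlongrightarrow> 0) (at_right 0)"
      by (rule tendsto_sandwich[rotated 2, OF tendsto_const]) (use evK in \<open>auto elim: eventually_mono\<close>)
  qed
  have B: "dini_at_zero (delta1 F) \<longleftrightarrow> dini_at_zero (delta F)"
  proof
    assume "dini_at_zero (delta1 F)"
    then obtain C \<sigma> where s: "\<sigma> \<in> class_D1" "\<forall>\<^sub>F r in at_right 0. \<bar>delta1 F r\<bar> \<le> C * \<sigma> r"
      unfolding dini_at_zero_def by blast
    have "\<forall>\<^sub>F r in at_right 0. \<bar>delta F r\<bar> \<le> C * \<sigma> r"
      using eventually_conj[OF s(2) evK] by (rule eventually_mono) auto
    then show "dini_at_zero (delta F)" unfolding dini_at_zero_def using s(1) by blast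
  next
    assume "dini_at_zero (delta F)"
    then obtain C \<sigma> where s: "\<sigma> \<in> class_D1" "\<forall>\<^sub>F r in at_right 0. \<bar>delta F r\<bar> \<le> C * \<sigma> r"
      unfolding dini_at_zero_def by blast
    have s2: "\<forall>\<^sub>F r in at_right 0. \<bar>delta F (2 * r)\<bar> \<le> C * \<sigma> (2 * r)"
      using eventually_compose_filterlim[OF s(2) f2] .
    have sig: "\<sigma> (2 * r) \<le> 2 * \<sigma> r \<and> 0 \<le> \<sigma> (2 * r)" if "0 < r" "2 * r \<le> R0" for r
    proof -
      have "\<sigma> (2 * r) / (2 * r) \<le> \<sigma> r / r" "0 \<le> \<sigma> (2 * r)"
        using s(1) that assms(2) unfolding class_D1_def by auto
      then show ?thesis using that by (simp add: field_simps)
    qed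
    have "\<forall>\<^sub>F r in at_right 0. \<bar>delta1 F r\<bar> \<le> (4 * max C 0) * \<sigma> r"
      using eventually_conj[OF s2 eventually_conj[OF evr evK]]
    proof (rule eventually_mono)
      fix r assume h: "\<bar>delta F (2 * r)\<bar> \<le> C * \<sigma> (2 * r) \<and> (0 < r \<and> 2 * r \<le> R0) \<and>
         0 \<le> delta F r \<and> delta F r \<le> delta1 F r \<and> delta1 F r \<le> 2 * delta F (2 * r)"
      have sg: "\<sigma> (2 * r) \<le> 2 * \<sigma> r" "0 \<le> \<sigma> (2 * r)" using sig h by auto
      have "\<bar>delta1 F r\<bar> = delta1 F r" using h by simp
      also have "\<dots> \<le> 2 * \<bar>delta F (2 * r)\<bar>" using h by simp
      also have "\<dots> \<le> 2 * (C * \<sigma> (2 * r))" using h by linarith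
      also have "\<dots> \<le> 2 * (max C 0 * \<sigma> (2 * r))" using sg by (simp add: mult_right_mono)
      also have "\<dots> \<le> 2 * (max C 0 * (2 * \<sigma> r))" using mult_left_mono[OF sg(1), of "max C 0"] by (simp add: algebra_simps)
      finally show "\<bar>delta1 F r\<bar> \<le> (4 * max C 0) * \<sigma> r" by simp
    qed
    then show "dini_at_zero (delta1 F)" unfolding dini_at_zero_def using s(1) by blast
  qed
  show ?thesis using A B by blast
qed
end
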